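(* Let $A$ be a finite alphabet. If $X\subseteq A^*$ is a regular language, then $W(X)$ is a regular language over $\{0,\dots,|A|-1\}$. In particular, if $X\subseteq A^{\mathbb{N}}$ is a (one-sided) sofic shift, then $W(X)$ is a sofic shift.
   Context: Winning set: for $n\in\mathbb{N}\cup\{\mathbb{N}\}$ and $X\subseteq A^n$, a choice sequence $\alpha=\alpha_0\alpha_1\cdots$ of length $n$ over $\{0,\dots,|A|-1\}$ determines a game: in round $j$ Alice chooses $A_j\subseteq A$ with $|A_j|=\alpha_j+1$, then Bob chooses $a_j\in A_j$; Alice wins if the produced word $a_0a_1\cdots$ lies in $X$. $W(X)$ is the set of choice sequences for which Alice has a winning strategy. For a set $X$ of words of various lengths, $W(X)=\bigcup_{n\in\mathbb{N}\cup\{\mathbb{N}\}}W(X\cap A^n)$. A one-sided sofic shift is the set of labels of right-infinite paths in a finite edge-labeled graph. *)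

theory Defs
  imports Main
begin

definition regular_over :: "'b set \<Rightarrow> 'b list set \<Rightarrow> bool" where
  "regular_over Sig L \<longleftrightarrow> L \<subseteq> lists Sig \<and>
     (\<exists>(Q::nat set) q0 (delta :: nat \<Rightarrow> 'b \<Rightarrow> nat) F.
        finite Q \<and> q0 \<in> Q \<and> (\<forall>q\<in>Q. \<forall>a\<in>Sig. delta q a \<in> Q) \<and> F \<subseteq> Q \<and>
        (\<forall>w\<in>lists Sig. w \<in> L \<longleftrightarrow> foldl delta q0 w \<in> F))"

definition sofic_over :: "'b set \<Rightarrow> (nat \<Rightarrow> 'b) set \<Rightarrow> bool" where
  "sofic_over Sig X \<longleftrightarrow>
     (\<exists>(V::nat set) (E :: (nat \<times> 'b \<times> nat) set).
        finite V \<and> finite E \<and> E \<subseteq> V \<times> Sig \<times> V \<and>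
        X = {x. \<exists>p::nat \<Rightarrow> nat. \<forall>i. (p i, x i, p (Suc i)) \<in> E})"

text \<open>Winning set for a set of finite words (union over all finite lengths n).
  A strategy of Alice maps the word produced so far to her chosen subset.\<close>
definition W_fin :: "('a::finite) list set \<Rightarrow> nat list set" where
  "W_fin X = {alpha. (\<forall>j<length alpha. alpha ! j < card (UNIV::'a set)) \<and>
     (\<exists>sigma :: 'a list \<Rightarrow> 'a set.
        (\<forall>u. length u < length alpha \<longrightarrow> card (sigma u) = alpha ! length u + 1) \<and>
        (\<forall>w. length w = length alpha \<and> (\<forall>i<length alpha. w ! i \<in> sigma (take i w))
              \<longrightarrow> w \<in> X))}"

definition W_inf :: "(nat \<Rightarrow> ('a::finite)) set \<Rightarrow> (nat \<Rightarrow> nat) set" where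
  "W_inf X = {alpha. (\<forall>j. alpha j < card (UNIV::'a set)) \<and>
     (\<exists>sigma :: 'a list \<Rightarrow> 'a set.
        (\<forall>u. card (sigma u) = alpha (length u) + 1) \<and>
        (\<forall>w. (\<forall>i. w i \<in> sigma (map w [0..<i])) \<longrightarrow> w \<in> X))}"

end

theory Submission
  imports Defs "HOL-Library.Countable_Set"
begin


lemma regular_overI:
  fixes Q :: "'s set" and delta :: "'s \<Rightarrow> 'b \<Rightarrow> 's"
  assumes L: "L \<subseteq> lists Sig" and fQ: "finite Q" and qs: "qs \<in> Q"
    and cl: "\<forall>q\<in>Q. \<forall>a\<in>Sig. delta q a \<in> Q" and FQ: "F \<subseteq> Q"
    and acc: "\<forall>w\<in>lists Sig. w \<in> L \<longleftrightarrow> foldl delta qs w \<in> F"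
  shows "regular_over Sig L"
proof -
  have cQ: "countable Q" using fQ by (rule countable_finite)
  define enc where "enc = to_nat_on Q"
  define dec where "dec = from_nat_into Q"
  have de: "\<And>q. q \<in> Q \<Longrightarrow> dec (enc q) = q" unfolding enc_def dec_def using cQ by simp
  have ij: "inj_on enc Q" unfolding enc_def using cQ by blast
  define delta' where "delta' m a = enc (delta (dec m) a)" for m a
  have fl: "\<And>q. q \<in> Q \<Longrightarrow> foldl delta' (enc q) w = enc (foldl delta q w) \<and> foldl delta q w \<in> Q"
    if "w \<in> lists Sig" for w
    using that
  proof (induction w)
    case Nil then show ?case by simp
  next
    case (Cons a w)
    then have "delta q a \<in> Q" using cl by auto
    moreover have "delta' (enc q) a = enc (delta q a)" unfolding delta'_def using de Cons by simp
    ultimately show ?case using Cons by simp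
  qed
  show ?thesis unfolding regular_over_def
  proof (rule conjI, fact L, rule exI[of _ "enc ` Q"], rule exI[of _ "enc qs"], rule exI[of _ delta'], rule exI[of _ "enc ` F"], intro conjI)
    show "finite (enc ` Q)" using fQ by simp
    show "enc qs \<in> enc ` Q" using qs by simp
    show "\<forall>q\<in>enc ` Q. \<forall>a\<in>Sig. delta' q a \<in> enc ` Q"
      unfolding delta'_def using de cl by auto
    show "enc ` F \<subseteq> enc ` Q" using FQ by auto
    show "\<forall>w\<in>lists Sig. (w \<in> L) = (foldl delta' (enc qs) w \<in> enc ` F)"
    proof
      fix w assume w: "w \<in> lists Sig"
      from fl[OF w qs] have e: "foldl delta' (enc qs) w = enc (foldl delta qs w)" and m: "foldl delta qs w \<in> Q" by auto
      have "(enc (foldl delta qs w) \<in> enc ` F) = (foldl delta qs w \<in> F)"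
        using inj_on_image_mem_iff[OF ij m FQ] .
      then show "(w \<in> L) = (foldl delta' (enc qs) w \<in> enc ` F)" using acc w e by simp
    qed
  qed
qed

lemma sofic_overI:
  fixes V :: "'s set" and E :: "('s \<times> 'b \<times> 's) set"
  assumes fV: "finite V" and fE: "finite E" and EV: "E \<subseteq> V \<times> Sig \<times> V"
    and X: "X = {x. \<exists>p. \<forall>i. (p i, x i, p (Suc i)) \<in> E}"
  shows "sofic_over Sig X"
proof -
  have cV: "countable V" using fV by (rule countable_finite)
  define enc where "enc = to_nat_on V"
  define dec where "dec = from_nat_into V"
  have de: "\<And>q. q \<in> V \<Longrightarrow> dec (enc q) = q" unfolding enc_def dec_def using cV by simp
  define E' where "E' = (\<lambda>(v,a,v'). (enc v, a, enc v')) ` E"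
  show ?thesis unfolding sofic_over_def
  proof (intro exI[of _ "enc ` V"] exI[of _ E'] conjI)
    show "finite (enc ` V)" using fV by simp
    show "finite E'" unfolding E'_def using fE by simp
    show "E' \<subseteq> enc ` V \<times> Sig \<times> enc ` V" unfolding E'_def using EV by auto
    show "X = {x. \<exists>p. \<forall>i. (p i, x i, p (Suc i)) \<in> E'}"
    proof (rule set_eqI, rule iffI)
      fix x assume "x \<in> X"
      then obtain p where p: "\<forall>i. (p i, x i, p (Suc i)) \<in> E" using X by auto
      have "\<forall>i. ((enc \<circ> p) i, x i, (enc \<circ> p) (Suc i)) \<in> E'"
        unfolding E'_def using p by force
      then show "x \<in> {x. \<exists>p. \<forall>i. (p i, x i, p (Suc i)) \<in> E'}" by blast
    next
      fix x assume "x \<in> {x. \<exists>p. \<forall>i. (p i, x i, p (Suc i)) \<in> E'}"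
      then obtain p where p: "\<forall>i. (p i, x i, p (Suc i)) \<in> E'" by auto
      have "\<forall>i. ((dec \<circ> p) i, x i, (dec \<circ> p) (Suc i)) \<in> E"
      proof
        fix i
        from p obtain v a v' where "(v,a,v') \<in> E" "p i = enc v" "x i = a" "p (Suc i) = enc v'"
          unfolding E'_def by fastforce
        moreover have "v \<in> V" "v' \<in> V" using EV calculation(1) by auto
        ultimately show "((dec \<circ> p) i, x i, (dec \<circ> p) (Suc i)) \<in> E" using de by simp
      qed
      then show "x \<in> X" using X by blast
    qed
  qed
qed



definition TF :: "nat set \<Rightarrow> (nat \<Rightarrow> 'a \<Rightarrow> nat) \<Rightarrow> nat \<Rightarrow> nat set \<Rightarrow> nat set" where
  "TF Q delta k S = {q\<in>Q. Suc k \<le> card {a. delta q a \<in> S}}"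

definition winq :: "(nat \<Rightarrow> 'a \<Rightarrow> nat) \<Rightarrow> nat set \<Rightarrow> nat \<Rightarrow> nat list \<Rightarrow> bool" where
  "winq delta F q alpha \<longleftrightarrow> (\<exists>sigma :: 'a list \<Rightarrow> 'a set.
        (\<forall>u. length u < length alpha \<longrightarrow> card (sigma u) = alpha ! length u + 1) \<and>
        (\<forall>w. length w = length alpha \<and> (\<forall>i<length alpha. w ! i \<in> sigma (take i w))
              \<longrightarrow> foldl delta q w \<in> F))"

lemma winq_iff:
  fixes delta :: "nat \<Rightarrow> ('a::finite) \<Rightarrow> nat"
  assumes cl: "\<forall>q\<in>Q. \<forall>a. delta q a \<in> Q" and FQ: "F \<subseteq> Q"
  shows "q \<in> Q \<Longrightarrow> (\<forall>j<length alpha. alpha ! j < card (UNIV::'a set)) \<Longrightarrow>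
     winq delta F q alpha \<longleftrightarrow> q \<in> foldr (TF Q delta) alpha F"
proof (induction alpha arbitrary: q)
  case Nil
  show ?case unfolding winq_def by auto
next
  case (Cons k beta)
  define R where "R = foldr (TF Q delta) beta F"
  have bnd: "\<forall>j<length beta. beta ! j < card (UNIV::'a set)" using Cons.prems(2) by auto
  have IH: "\<And>a. winq delta F (delta q a) beta \<longleftrightarrow> delta q a \<in> R"
    unfolding R_def using Cons.IH[OF _ bnd] cl Cons.prems(1) by blast
  have eq: "q \<in> foldr (TF Q delta) (k # beta) F \<longleftrightarrow> Suc k \<le> card {a. delta q a \<in> R}"
    using Cons.prems(1) by (simp add: TF_def R_def)
  show ?case
  proof
    assume "winq delta F q (k # beta)"
    then obtain sigma :: "'a list \<Rightarrow> 'a set" where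
      c: "\<forall>u. length u < length (k#beta) \<longrightarrow> card (sigma u) = (k#beta) ! length u + 1" and
      w: "\<forall>w. length w = length (k#beta) \<and> (\<forall>i<length (k#beta). w ! i \<in> sigma (take i w))
              \<longrightarrow> foldl delta q w \<in> F"
      unfolding winq_def by blast
    have "sigma [] \<subseteq> {a. delta q a \<in> R}"
    proof
      fix a assume a: "a \<in> sigma []"
      have "winq delta F (delta q a) beta"
        unfolding winq_def
      proof (intro exI[of _ "\<lambda>u. sigma (a # u)"] conjI allI impI)
        fix u :: "'a list" assume "length u < length beta"
        then show "card (sigma (a # u)) = beta ! length u + 1" using c[rule_format, of "a#u"] by simp
      next
        fix w' :: "'a list"
        assume h: "length w' = length beta \<and> (\<forall>i<length beta. w' ! i \<in> sigma (a # take i w'))"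
        have "\<forall>i<length (k#beta). (a#w') ! i \<in> sigma (take i (a#w'))"
        proof (intro allI impI)
          fix i assume "i < length (k#beta)"
          then show "(a#w') ! i \<in> sigma (take i (a#w'))"
            using h a by (cases i) auto
        qed
        then have "foldl delta q (a#w') \<in> F" using w[rule_format, of "a#w'"] h by simp
        then show "foldl delta (delta q a) w' \<in> F" by simp
      qed
      then show "a \<in> {a. delta q a \<in> R}" using IH by simp
    qed
    then have "card (sigma []) \<le> card {a. delta q a \<in> R}" by (simp add: card_mono)
    moreover have "card (sigma []) = Suc k" using c[rule_format, of "[]"] by simp
    ultimately show "q \<in> foldr (TF Q delta) (k # beta) F" using eq by simp
  next
    assume "q \<in> foldr (TF Q delta) (k # beta) F"
    then have "Suc k \<le> card {a. delta q a \<in> R}" using eq by simp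
    then obtain B where B: "B \<subseteq> {a. delta q a \<in> R}" "card B = Suc k"
      by (meson obtain_subset_with_card_n)
    then obtain b0 where b0: "b0 \<in> B" by fastforce
    have "\<forall>a\<in>B. \<exists>sg :: 'a list \<Rightarrow> 'a set.
        (\<forall>u. length u < length beta \<longrightarrow> card (sg u) = beta ! length u + 1) \<and>
        (\<forall>w. length w = length beta \<and> (\<forall>i<length beta. w ! i \<in> sg (take i w))
              \<longrightarrow> foldl delta (delta q a) w \<in> F)"
      using B(1) IH unfolding winq_def by blast
    then obtain sg where sg: "\<forall>a\<in>B.
        (\<forall>u. length u < length beta \<longrightarrow> card (sg a u) = beta ! length u + 1) \<and>
        (\<forall>w. length w = length beta \<and> (\<forall>i<length beta. w ! i \<in> sg a (take i w))
              \<longrightarrow> foldl delta (delta q a) w \<in> F)"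
      by metis
    define sigma where "sigma u = (case u of [] \<Rightarrow> B | a # u' \<Rightarrow> sg (if a \<in> B then a else b0) u')" for u
    show "winq delta F q (k # beta)"
      unfolding winq_def
    proof (intro exI[of _ sigma] conjI allI impI)
      fix u :: "'a list" assume "length u < length (k # beta)"
      then show "card (sigma u) = (k # beta) ! length u + 1"
        using B(2) sg b0 by (cases u) (auto simp: sigma_def)
    next
      fix w :: "'a list"
      assume h: "length w = length (k # beta) \<and> (\<forall>i<length (k # beta). w ! i \<in> sigma (take i w))"
      then obtain a w' where aw: "w = a # w'" by (cases w) auto
      have aB: "a \<in> B" using h[THEN conjunct2, rule_format, of 0] by (simp add: aw sigma_def)
      have "\<forall>i<length beta. w' ! i \<in> sg a (take i w')"
      proof (intro allI impI)
        fix i assume "i < length beta"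
        then have "w ! Suc i \<in> sigma (take (Suc i) w)" using h by simp
        then show "w' ! i \<in> sg a (take i w')" using aB by (simp add: aw sigma_def)
      qed
      then have "foldl delta (delta q a) w' \<in> F" using sg aB h aw by simp
      then show "foldl delta q w \<in> F" by (simp add: aw)
    qed
  qed
qed



lemma part1:
  fixes X :: "('a::finite) list set"
  assumes "regular_over UNIV X"
  shows "regular_over {..<card (UNIV::'a set)} (W_fin X)"
proof -
  obtain Q q0 and delta :: "nat \<Rightarrow> 'a \<Rightarrow> nat" and F where
    fQ: "finite Q" and q0: "q0 \<in> Q" and cl: "\<forall>q\<in>Q. \<forall>a. delta q a \<in> Q" and FQ: "F \<subseteq> Q"
    and acc: "\<forall>w. w \<in> X \<longleftrightarrow> foldl delta q0 w \<in> F"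
    using assms unfolding regular_over_def by auto
  define n where "n = card (UNIV::'a set)"
  define T where "T = TF Q delta"
  have TQ: "T k S \<subseteq> Q" for k S unfolding T_def TF_def by auto
  define stp where "stp Fm k = {S \<in> Pow Q. T k S \<in> Fm}" for Fm k
  define init where "init = {S \<in> Pow Q. q0 \<in> S}"
  have fold: "foldl stp init alpha = {S \<in> Pow Q. q0 \<in> foldr T alpha S}" for alpha
  proof (induction alpha rule: rev_induct)
    case Nil then show ?case by (simp add: init_def)
  next
    case (snoc k alpha)
    have "foldl stp init (alpha @ [k]) = stp {S \<in> Pow Q. q0 \<in> foldr T alpha S} k"
      using snoc by simp
    then show ?case using TQ unfolding stp_def by auto
  qed
  have W: "W_fin X = {alpha. (\<forall>j<length alpha. alpha ! j < n) \<and> winq delta F q0 alpha}"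
    unfolding W_fin_def winq_def n_def using acc by auto
  show ?thesis
  proof (rule regular_overI[where Q = "Pow (Pow Q)" and qs = init and delta = stp
        and F = "{Fm \<in> Pow (Pow Q). F \<in> Fm}"])
    show "W_fin X \<subseteq> lists {..<card (UNIV::'a set)}"
      unfolding W_fin_def by (auto simp: in_set_conv_nth)
    show "finite (Pow (Pow Q))" using fQ by simp
    show "init \<in> Pow (Pow Q)" unfolding init_def by auto
    show "\<forall>q\<in>Pow (Pow Q). \<forall>a\<in>{..<card (UNIV::'a set)}. stp q a \<in> Pow (Pow Q)"
      unfolding stp_def by auto
    show "{Fm \<in> Pow (Pow Q). F \<in> Fm} \<subseteq> Pow (Pow Q)" by auto
    show "\<forall>w\<in>lists {..<card (UNIV::'a set)}. (w \<in> W_fin X) = (foldl stp init w \<in> {Fm \<in> Pow (Pow Q). F \<in> Fm})"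
    proof
      fix w assume w: "w \<in> lists {..<card (UNIV::'a set)}"
      then have b: "\<forall>j<length w. w ! j < n" unfolding n_def by (auto simp: nth_mem)
      have "w \<in> W_fin X \<longleftrightarrow> q0 \<in> foldr T w F"
        using W b winq_iff[OF cl FQ q0 b[unfolded n_def]] unfolding T_def by simp
      then show "(w \<in> W_fin X) = (foldl stp init w \<in> {Fm \<in> Pow (Pow Q). F \<in> Fm})"
        using fold FQ by auto
    qed
  qed
qed



lemma fin_mono_choice:
  fixes P :: "'v \<Rightarrow> nat \<Rightarrow> bool"
  assumes fS: "finite S" and ex: "\<forall>m. \<exists>v\<in>S. P v m"
    and mono: "\<forall>v m m'. m \<le> m' \<longrightarrow> P v m' \<longrightarrow> P v m"
  shows "\<exists>v\<in>S. \<forall>m. P v m"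
proof (rule ccontr)
  assume "\<not> ?thesis"
  then have "\<forall>v\<in>S. \<exists>m. \<not> P v m" by blast
  then obtain f where f: "\<forall>v\<in>S. \<not> P v (f v)" by metis
  define M where "M = Max (f ` S)"
  obtain v where v: "v \<in> S" "P v M" using ex by blast
  have "f v \<le> M" unfolding M_def using fS v(1) by simp
  then have "P v (f v)" using mono v(2) by blast
  then show False using f v(1) by blast
qed

lemma konig:
  fixes E :: "(nat \<times> 'a \<times> nat) set" and w :: "nat \<Rightarrow> 'a"
  assumes fE: "finite E" and fS: "finite S0"
    and pre: "\<forall>m. \<exists>p. p 0 \<in> S0 \<and> (\<forall>j<m. (p j, w j, p (Suc j)) \<in> E)"
  shows "\<exists>p. \<forall>i. (p i, w i, p (Suc i)) \<in> E"
proof -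
  define fp where "fp i v m \<longleftrightarrow> (\<exists>p. p 0 = v \<and> (\<forall>j<m. (p j, w (i+j), p (Suc j)) \<in> E))" for i v m
  define good where "good i v \<longleftrightarrow> (\<forall>m. fp i v m)" for i v
  have mono: "fp i v m" if mm: "m \<le> m'" "fp i v m'" for i v m m'
  proof -
    obtain p where "p 0 = v" "\<forall>j<m'. (p j, w (i+j), p (Suc j)) \<in> E" using mm(2) unfolding fp_def by blast
    then show "fp i v m" unfolding fp_def using mm(1) by (intro exI[of _ p]) auto
  qed
  have mono': "\<forall>v m m'. m \<le> m' \<longrightarrow> fp i v m' \<longrightarrow> fp i v m" for i
    using mono by blast
  have "\<exists>v\<in>S0. \<forall>m. fp 0 v m"
  proof (rule fin_mono_choice[of S0 "fp 0", OF fS _ mono'])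
    show "\<forall>m. \<exists>v\<in>S0. fp 0 v m"
    proof
      fix m
      obtain p where "p 0 \<in> S0" "\<forall>j<m. (p j, w j, p (Suc j)) \<in> E" using pre by blast
      then have "fp 0 (p 0) m" unfolding fp_def by (intro exI[of _ p]) simp
      then show "\<exists>v\<in>S0. fp 0 v m" using \<open>p 0 \<in> S0\<close> by blast
    qed
  qed
  then obtain v0 where v0: "good 0 v0" unfolding good_def by blast
  have stepg: "\<exists>v'. (v, w i, v') \<in> E \<and> good (Suc i) v'" if g: "good i v" for i v
  proof -
    define Sc where "Sc = {v'. (v, w i, v') \<in> E}"
    have fSc: "finite Sc"
    proof (rule finite_subset)
      show "Sc \<subseteq> (\<lambda>e. snd (snd e)) ` E"
      proof
        fix x assume "x \<in> Sc"
        then have "(v, w i, x) \<in> E" unfolding Sc_def by simp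
        then show "x \<in> (\<lambda>e. snd (snd e)) ` E" by (rule rev_image_eqI) simp
      qed
      show "finite ((\<lambda>e. snd (snd e)) ` E)" using fE by simp
    qed
    have "\<forall>m. \<exists>v'\<in>Sc. fp (Suc i) v' m"
    proof
      fix m
      from g obtain p where p: "p 0 = v" "\<forall>j<Suc m. (p j, w (i+j), p (Suc j)) \<in> E"
        unfolding good_def fp_def by blast
      have "p 1 \<in> Sc" using p by (auto simp: Sc_def)
      moreover have "fp (Suc i) (p 1) m"
        unfolding fp_def
      proof (intro exI[of _ "\<lambda>j. p (Suc j)"] conjI allI impI)
        fix j assume "j < m"
        then show "(p (Suc j), w (Suc i + j), p (Suc (Suc j))) \<in> E"
          using p(2)[rule_format, of "Suc j"] by simp
      qed simp
      ultimately show "\<exists>v'\<in>Sc. fp (Suc i) v' m" by blast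
    qed
    then obtain v' where "v' \<in> Sc" "\<forall>m. fp (Suc i) v' m"
      using fin_mono_choice[of Sc "fp (Suc i)", OF fSc _ mono'] by blast
    then show ?thesis unfolding Sc_def good_def by blast
  qed
  define nxt where "nxt i v = (SOME v'. (v, w i, v') \<in> E \<and> good (Suc i) v')" for i v
  define p where "p = rec_nat v0 nxt"
  have p0: "p 0 = v0" and pS: "p (Suc i) = nxt i (p i)" for i unfolding p_def by simp_all
  have gp: "good i (p i)" for i
  proof (induction i)
    case 0 then show ?case using v0 p0 by simp
  next
    case (Suc i)
    show ?case unfolding pS nxt_def using someI_ex[OF stepg[OF Suc]] by blast
  qed
  have "(p i, w i, p (Suc i)) \<in> E" for i
    unfolding pS nxt_def using someI_ex[OF stepg[OF gp[of i]]] by blast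
  then show ?thesis by blast
qed

definition stp :: "(nat \<times> 'a \<times> nat) set \<Rightarrow> nat set \<Rightarrow> 'a \<Rightarrow> nat set" where
  "stp E S a = {v'. \<exists>v\<in>S. (v, a, v') \<in> E}"

lemma reach:
  "v' \<in> foldl (stp E) S u \<longleftrightarrow>
    (\<exists>p. p 0 \<in> S \<and> p (length u) = v' \<and> (\<forall>j<length u. (p j, u ! j, p (Suc j)) \<in> E))"
proof (induction u arbitrary: v' rule: rev_induct)
  case Nil
  show ?case
  proof
    assume "v' \<in> foldl (stp E) S []"
    then show "\<exists>p. p 0 \<in> S \<and> p (length []) = v' \<and> (\<forall>j<length []. (p j, [] ! j, p (Suc j)) \<in> E)"
      by (intro exI[of _ "\<lambda>_. v'"]) simp
  qed auto
next
  case (snoc a u)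
  show ?case
  proof
    assume "v' \<in> foldl (stp E) S (u @ [a])"
    then obtain v where v: "v \<in> foldl (stp E) S u" "(v, a, v') \<in> E" by (auto simp: stp_def)
    then obtain p where p: "p 0 \<in> S" "p (length u) = v" "\<forall>j<length u. (p j, u ! j, p (Suc j)) \<in> E"
      using snoc.IH[of v] by blast
    define p' where "p' = p(Suc (length u) := v')"
    show "\<exists>p. p 0 \<in> S \<and> p (length (u @ [a])) = v' \<and> (\<forall>j<length (u @ [a]). (p j, (u @ [a]) ! j, p (Suc j)) \<in> E)"
    proof (intro exI[of _ p'] conjI allI impI)
      show "p' 0 \<in> S" using p by (simp add: p'_def)
      show "p' (length (u @ [a])) = v'" by (simp add: p'_def)
      fix j assume "j < length (u @ [a])"
      then have "j < length u \<or> j = length u" by auto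
      then show "(p' j, (u @ [a]) ! j, p' (Suc j)) \<in> E"
        using p v by (auto simp: p'_def nth_append)
    qed
  next
    assume "\<exists>p. p 0 \<in> S \<and> p (length (u @ [a])) = v' \<and> (\<forall>j<length (u @ [a]). (p j, (u @ [a]) ! j, p (Suc j)) \<in> E)"
    then obtain p where p: "p 0 \<in> S" "p (Suc (length u)) = v'"
      "\<forall>j<Suc (length u). (p j, (u @ [a]) ! j, p (Suc j)) \<in> E" by auto
    have "\<forall>j<length u. (p j, u ! j, p (Suc j)) \<in> E"
    proof (intro allI impI)
      fix j assume "j < length u"
      then show "(p j, u ! j, p (Suc j)) \<in> E" using p(3)[rule_format, of j] by (simp add: nth_append)
    qed
    then have "p (length u) \<in> foldl (stp E) S u" using snoc.IH[of "p (length u)"] p(1) by blast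
    moreover have "(p (length u), a, v') \<in> E" using p(3)[rule_format, of "length u"] p(2) by simp
    ultimately show "v' \<in> foldl (stp E) S (u @ [a])" by (auto simp: stp_def)
  qed
qed



lemma ext_play:
  fixes sigma :: "'a list \<Rightarrow> 'a set"
  assumes ne: "\<forall>u. sigma u \<noteq> {}" and c: "\<forall>i<length u. u ! i \<in> sigma (take i u)"
  shows "\<exists>w. (\<forall>i. w i \<in> sigma (map w [0..<i])) \<and> map w [0..<length u] = u"
proof -
  define g where "g m f = (if m < length u then u ! m else (SOME a. a \<in> sigma f))" for m f
  define f where "f = rec_nat [] (\<lambda>m fm. fm @ [g m fm])"
  have f0: "f 0 = []" and fS: "f (Suc m) = f m @ [g m (f m)]" for m unfolding f_def by simp_all
  have ftake: "m \<le> length u \<Longrightarrow> f m = take m u" for m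
  proof (induction m)
    case 0 then show ?case by (simp add: f0)
  next
    case (Suc m)
    then have "m < length u" by simp
    then show ?case using Suc by (simp add: fS g_def take_Suc_conv_app_nth)
  qed
  define w where "w i = g i (f i)" for i
  have mw: "map w [0..<i] = f i" for i
    by (induction i) (simp_all add: f0 fS w_def)
  show ?thesis
  proof (intro exI[of _ w] conjI allI)
    fix i
    show "w i \<in> sigma (map w [0..<i])"
    proof (cases "i < length u")
      case True
      then show ?thesis using c ftake[of i] by (simp add: mw w_def g_def)
    next
      case False
      then show ?thesis using ne by (simp add: mw w_def g_def some_in_eq)
    qed
  next
    show "map w [0..<length u] = u" using mw ftake by simp
  qed
qed

lemma cons_prefix:
  assumes "\<forall>i. w i \<in> sigma (map w [0..<i])"
  shows "\<forall>j<length (map w [0..<i]). map w [0..<i] ! j \<in> sigma (take j (map w [0..<i]))"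
  using assms by (simp add: take_map)

lemma cons_snoc:
  assumes "\<forall>j<length u. u ! j \<in> sigma (take j u)" "a \<in> sigma u"
  shows "\<forall>j<length (u@[a]). (u@[a]) ! j \<in> sigma (take j (u@[a]))"
  using assms by (auto simp: nth_append less_Suc_eq)

lemma stp_sub: "E \<subseteq> V \<times> UNIV \<times> V \<Longrightarrow> foldl (stp E) V u \<subseteq> V"
proof (induction u rule: rev_induct)
  case (snoc a u)
  then show ?case by (auto simp: stp_def)
qed simp



definition TT :: "nat set \<Rightarrow> (nat \<times> 'a \<times> nat) set \<Rightarrow> nat \<Rightarrow> nat set set \<Rightarrow> nat set set" where
  "TT V E k Ws = {S. S \<subseteq> V \<and> S \<noteq> {} \<and> Suc k \<le> card {a. stp E S a \<in> Ws}}"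

lemma part2:
  fixes Y :: "(nat \<Rightarrow> ('a::finite)) set"
  assumes "sofic_over UNIV Y"
  shows "sofic_over {..<card (UNIV::'a set)} (W_inf Y)"
proof -
  obtain V and E :: "(nat \<times> 'a \<times> nat) set" where fV: "finite V" and fE: "finite E"
    and EV: "E \<subseteq> V \<times> UNIV \<times> V" and Y: "Y = {x. \<exists>p. \<forall>i. (p i, x i, p (Suc i)) \<in> E}"
    using assms unfolding sofic_over_def by auto
  define n where "n = card (UNIV::'a set)"
  define T where "T = TT V E"
  define Wset where "Wset = {alpha. (\<forall>j. alpha j < n) \<and>
      (\<exists>Ws. \<forall>i. Ws i \<noteq> {} \<and> Ws i \<subseteq> T (alpha i) (Ws (Suc i)))}"
  have "W_inf Y \<subseteq> Wset"
  proof
    fix alpha assume "alpha \<in> W_inf Y"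
    then obtain sigma :: "'a list \<Rightarrow> 'a set" where
      bnd: "\<forall>j. alpha j < n" and
      c: "\<forall>u. card (sigma u) = alpha (length u) + 1" and
      win: "\<forall>w. (\<forall>i. w i \<in> sigma (map w [0..<i])) \<longrightarrow> w \<in> Y"
      unfolding W_inf_def n_def by blast
    have ne: "\<forall>u. sigma u \<noteq> {}"
    proof
      fix u show "sigma u \<noteq> {}" using c[rule_format, of u] by (metis card.empty nat.distinct(1) Suc_eq_plus1)
    qed
    define Ws where "Ws i = {foldl (stp E) V u | u. length u = i \<and> (\<forall>j<length u. u ! j \<in> sigma (take j u))}" for i
    have "\<forall>i. Ws i \<noteq> {} \<and> Ws i \<subseteq> T (alpha i) (Ws (Suc i))"
    proof (intro allI conjI)
      fix i
      obtain w where w: "\<forall>i. w i \<in> sigma (map w [0..<i])"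
        using ext_play[OF ne, of "[]"] by auto
      have "foldl (stp E) V (map w [0..<i]) \<in> Ws i"
        unfolding Ws_def using cons_prefix[OF w, of i] by auto
      then show "Ws i \<noteq> {}" by blast
      show "Ws i \<subseteq> T (alpha i) (Ws (Suc i))"
      proof
        fix S assume "S \<in> Ws i"
        then obtain u where u: "S = foldl (stp E) V u" "length u = i"
          "\<forall>j<length u. u ! j \<in> sigma (take j u)" unfolding Ws_def by blast
        have SV: "S \<subseteq> V" using stp_sub[OF EV] u(1) by blast
        obtain w where w: "\<forall>i. w i \<in> sigma (map w [0..<i])" "map w [0..<length u] = u"
          using ext_play[OF ne u(3)] by blast
        have "w \<in> Y" using win w(1) by blast
        then obtain p where p: "\<forall>i. (p i, w i, p (Suc i)) \<in> E" using Y by blast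
        have uj: "u ! j = w j" if "j < length u" for j
          using that w(2) by (metis add_0 diff_zero nth_map_upt)
        have "p 0 \<in> V" using p EV by blast
        moreover have "\<forall>j<length u. (p j, u ! j, p (Suc j)) \<in> E" using p uj by simp
        ultimately have "p (length u) \<in> S" unfolding u(1) using reach by blast
        then have Sne: "S \<noteq> {}" by blast
        have "sigma u \<subseteq> {a. stp E S a \<in> Ws (Suc i)}"
        proof
          fix a assume a: "a \<in> sigma u"
          have "foldl (stp E) V (u @ [a]) \<in> Ws (Suc i)"
            unfolding Ws_def using cons_snoc[OF u(3) a] u(2)
            by (intro CollectI exI[of _ "u @ [a]"]) simp
          then show "a \<in> {a. stp E S a \<in> Ws (Suc i)}" using u(1) by simp
        qed
        then have "card (sigma u) \<le> card {a. stp E S a \<in> Ws (Suc i)}" by (simp add: card_mono)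
        then have "Suc (alpha i) \<le> card {a. stp E S a \<in> Ws (Suc i)}" using c u(2) by simp
        then show "S \<in> T (alpha i) (Ws (Suc i))" using SV Sne unfolding T_def TT_def by simp
      qed
    qed
    then show "alpha \<in> Wset" unfolding Wset_def using bnd by blast
  qed
  moreover have "Wset \<subseteq> W_inf Y"
  proof
    fix alpha assume "alpha \<in> Wset"
    then obtain Ws where bnd: "\<forall>j. alpha j < n" and
      Ws: "\<forall>i. Ws i \<noteq> {} \<and> Ws i \<subseteq> T (alpha i) (Ws (Suc i))"
      unfolding Wset_def by blast
    obtain S0 where S0: "S0 \<in> Ws 0" using Ws by blast
    define st where "st u = foldl (stp E) S0 u" for u
    define sigma where "sigma u = (if st u \<in> Ws (length u)
        then (SOME B. B \<subseteq> {a. stp E (st u) a \<in> Ws (Suc (length u))} \<and> card B = Suc (alpha (length u)))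
        else (SOME B :: 'a set. card B = Suc (alpha (length u))))" for u
    have sig: "card (sigma u) = alpha (length u) + 1 \<and>
       (st u \<in> Ws (length u) \<longrightarrow> sigma u \<subseteq> {a. stp E (st u) a \<in> Ws (Suc (length u))})" for u
    proof (cases "st u \<in> Ws (length u)")
      case True
      then have "st u \<in> T (alpha (length u)) (Ws (Suc (length u)))" using Ws by blast
      then have "Suc (alpha (length u)) \<le> card {a. stp E (st u) a \<in> Ws (Suc (length u))}"
        unfolding T_def TT_def by simp
      then have "\<exists>B. B \<subseteq> {a. stp E (st u) a \<in> Ws (Suc (length u))} \<and> card B = Suc (alpha (length u))"
        by (meson obtain_subset_with_card_n)
      from someI_ex[OF this] show ?thesis using True by (simp add: sigma_def)
    next
      case False
      have "Suc (alpha (length u)) \<le> card (UNIV :: 'a set)" using bnd unfolding n_def by (simp add: Suc_leI)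
      then have "\<exists>B :: 'a set. card B = Suc (alpha (length u))"
        by (meson obtain_subset_with_card_n)
      from someI_ex[OF this] show ?thesis using False by (simp add: sigma_def)
    qed
    have S0V: "S0 \<subseteq> V" using Ws S0 unfolding T_def TT_def by blast
    have "alpha \<in> W_inf Y"
      unfolding W_inf_def
    proof (intro CollectI conjI exI[of _ sigma] allI impI)
      fix j show "alpha j < card (UNIV :: 'a set)" using bnd n_def by simp
    next
      fix u :: "'a list" show "card (sigma u) = alpha (length u) + 1" using sig by blast
    next
      fix w assume w: "\<forall>i. w i \<in> sigma (map w [0..<i])"
      have inW: "st (map w [0..<i]) \<in> Ws i" for i
      proof (induction i)
        case 0 then show ?case using S0 by (simp add: st_def)
      next
        case (Suc i)
        have "w i \<in> sigma (map w [0..<i])" using w by blast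
        then have "stp E (st (map w [0..<i])) (w i) \<in> Ws (Suc i)" using sig[of "map w [0..<i]"] Suc by auto
        then show ?case by (simp add: st_def)
      qed
      have "\<forall>m. \<exists>p. p 0 \<in> S0 \<and> (\<forall>j<m. (p j, w j, p (Suc j)) \<in> E)"
      proof
        fix m
        have "st (map w [0..<m]) \<in> T (alpha m) (Ws (Suc m))" using inW Ws by blast
        then have "st (map w [0..<m]) \<noteq> {}" unfolding T_def TT_def by simp
        then obtain v' where "v' \<in> foldl (stp E) S0 (map w [0..<m])" unfolding st_def by blast
        then obtain p where p: "p 0 \<in> S0" "\<forall>j<m. (p j, (map w [0..<m]) ! j, p (Suc j)) \<in> E"
          unfolding reach by auto
        then show "\<exists>p. p 0 \<in> S0 \<and> (\<forall>j<m. (p j, w j, p (Suc j)) \<in> E)" by auto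
      qed
      then have "\<exists>p. \<forall>i. (p i, w i, p (Suc i)) \<in> E"
        using konig[OF fE finite_subset[OF S0V fV]] by blast
      then show "w \<in> Y" using Y by blast
    qed
    then show "alpha \<in> W_inf Y" .
  qed
  ultimately have WW: "W_inf Y = Wset" by blast
  define E' where "E' = {(A, k, B). A \<in> Pow (Pow V) \<and> B \<in> Pow (Pow V) \<and> k < n \<and> A \<noteq> {} \<and> A \<subseteq> T k B}"
  show ?thesis
  proof (rule sofic_overI[where V = "Pow (Pow V)" and E = E'])
    show "finite (Pow (Pow V))" using fV by simp
    have "E' \<subseteq> Pow (Pow V) \<times> {..<n} \<times> Pow (Pow V)" unfolding E'_def by auto
    then show "E' \<subseteq> Pow (Pow V) \<times> {..<card (UNIV::'a set)} \<times> Pow (Pow V)" unfolding n_def .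
    then show "finite E'" using fV by (metis finite_subset finite_SigmaI finite_Pow_iff finite_lessThan)
    show "W_inf Y = {x. \<exists>p. \<forall>i. (p i, x i, p (Suc i)) \<in> E'}"
    proof (rule set_eqI, rule iffI)
      fix x assume "x \<in> W_inf Y"
      then obtain Ws where bnd: "\<forall>j. x j < n" and
        Ws: "\<forall>i. Ws i \<noteq> {} \<and> Ws i \<subseteq> T (x i) (Ws (Suc i))"
        unfolding WW Wset_def by blast
      have TP: "T k B \<subseteq> Pow V" for k B unfolding T_def TT_def by auto
      have "Ws i \<in> Pow (Pow V)" for i using Ws TP by blast
      then have "\<forall>i. (Ws i, x i, Ws (Suc i)) \<in> E'" unfolding E'_def using bnd Ws by auto
      then show "x \<in> {x. \<exists>p. \<forall>i. (p i, x i, p (Suc i)) \<in> E'}" by blast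
    next
      fix x assume "x \<in> {x. \<exists>p. \<forall>i. (p i, x i, p (Suc i)) \<in> E'}"
      then obtain p where p: "\<forall>i. (p i, x i, p (Suc i)) \<in> E'" by blast
      then have "\<forall>j. x j < n" "\<forall>i. p i \<noteq> {} \<and> p i \<subseteq> T (x i) (p (Suc i))"
        unfolding E'_def by auto
      then show "x \<in> W_inf Y" unfolding WW Wset_def by blast
    qed
  qed
qed


theorem mainTheorem11:
  fixes X :: "('a::finite) list set" and Y :: "(nat \<Rightarrow> 'a) set"
  shows "(regular_over UNIV X \<longrightarrow> regular_over {..<card (UNIV::'a set)} (W_fin X)) \<and>
         (sofic_over UNIV Y \<longrightarrow> sofic_over {..<card (UNIV::'a set)} (W_inf Y))"
  using part1[of X] part2[of Y] by blast

end
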